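(* Let $f:\{0,1\}^n\to\{0,1\}$, let $\delta>0$, let $a,b$ be non-negative integers, $\alpha_0\in[0,1)$, $\beta_0,\alpha_1,\beta_1\ge0$, and let $\mu$ be a bit-wise product distribution on $\{0,1\}^n$ that is $(\alpha_0,\beta_0,\alpha_1,\beta_1,a,b)$-feasible for $f$. Then there is a deterministic decision tree for $f$ of depth at most $ab$ whose error probability under $\mu$ is at most $$\frac14+\alpha_1+\beta_1+4b(\beta_1+\delta)+\frac{\beta_0}{(1-\alpha_0)\delta}.$$
   Context: $\mu$ is bit-wise product if $\mu(x)=\prod_i p_i(x_i)$ with $p_i(0)+p_i(1)=1$. A subcube with support $s\in\{0,1,\star\}^n$ is $\{x: s_i\ne\star\Rightarrow x_i=s_i\}$; its support size is $|\{i:s_i\in\{0,1\}\}|$. For $A\subseteq\{0,1\}^n$, $\mu_z(A)=\mu(A\cap f^{-1}(z))$, $\mu_z=\mu_z(\{0,1\}^n)$. $\mu$ is $(\alpha_0,\beta_0,\alpha_1,\beta_1,a,b)$-feasible for $f$ if there exist $u_R\ge0$ indexed by subcubes $R$ of support size at most $a$ and $w_R\ge0$ indexed by subcubes $R$ of support size at most $b$ with: $\sum_{R\ni x}u_R\ge1-\alpha_0$ for all $x\in f^{-1}(0)$; $\sum_{R\ni x}u_R\le\beta_0$ for all $x\in f^{-1}(1)$; $\sum_R\mu_1(R)w_R\ge(1-\alpha_1)\mu_1$; $\sum_{R\ni x}w_R\le1$ for all $x$; $\sum_{R\ni x}w_R\le\beta_1$ for all $x\in f^{-1}(0)$. Convention: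 if $p_i(0)\in\{0,1\}$ (bit $i$ fixed under $\mu$), then $i$ is not in the support of any $R$ used in the feasible solution. *)

theory Defs
  imports Complex_Main
begin

text \<open>Points of the Boolean cube {0,1}^n are bool lists of length n (True = 1).
  A bit-wise product distribution is given by p :: nat => real, where p i is the
  probability that bit i equals 1 (so p_i(1) = p i, p_i(0) = 1 - p i).\<close>

definition cube :: "nat \<Rightarrow> bool list set" where
  "cube n = {x. length x = n}"

definition prod_dist :: "nat \<Rightarrow> (nat \<Rightarrow> real) \<Rightarrow> bool"
  where "prod_dist n p \<longleftrightarrow> (\<forall>i<n. 0 \<le> p i \<and> p i \<le> 1)"

definition mu_pt :: "nat \<Rightarrow> (nat \<Rightarrow> real) \<Rightarrow> bool list \<Rightarrow> real" where
  "mu_pt n p x = (\<Prod>i<n. if x ! i then p i else 1 - p i)"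

definition mu :: "nat \<Rightarrow> (nat \<Rightarrow> real) \<Rightarrow> bool list set \<Rightarrow> real" where
  "mu n p A = (\<Sum>x\<in>A \<inter> cube n. mu_pt n p x)"

definition mu_z :: "nat \<Rightarrow> (nat \<Rightarrow> real) \<Rightarrow> (bool list \<Rightarrow> bool) \<Rightarrow> bool \<Rightarrow> bool list set \<Rightarrow> real" where
  "mu_z n p f z A = mu n p (A \<inter> {x. f x = z})"

text \<open>Subcube supports s in {0,1,*}^n: None = *, Some b = fixed bit b.\<close>
definition supports :: "nat \<Rightarrow> bool option list set" where
  "supports n = {s. length s = n}"

definition subcube :: "nat \<Rightarrow> bool option list \<Rightarrow> bool list set" where
  "subcube n s = {x \<in> cube n. \<forall>i<n. s ! i \<noteq> None \<longrightarrow> x ! i = the (s ! i)}"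

definition supp_size :: "nat \<Rightarrow> bool option list \<Rightarrow> nat" where
  "supp_size n s = card {i. i < n \<and> s ! i \<noteq> None}"

definition fixed_bit :: "(nat \<Rightarrow> real) \<Rightarrow> nat \<Rightarrow> bool" where
  "fixed_bit p i \<longleftrightarrow> (1 - p i = 0 \<or> 1 - p i = 1)"

definition feasible ::
  "nat \<Rightarrow> (nat \<Rightarrow> real) \<Rightarrow> (bool list \<Rightarrow> bool) \<Rightarrow> real \<Rightarrow> real \<Rightarrow> real \<Rightarrow> real \<Rightarrow> nat \<Rightarrow> nat \<Rightarrow> bool"
where
  "feasible n p f \<alpha>0 \<beta>0 \<alpha>1 \<beta>1 a b \<longleftrightarrow>
    (\<exists>u w :: bool option list \<Rightarrow> real.
       (\<forall>s\<in>supports n. 0 \<le> u s \<and> 0 \<le> w s) \<and>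
       (\<forall>s\<in>supports n. u s \<noteq> 0 \<longrightarrow> supp_size n s \<le> a) \<and>
       (\<forall>s\<in>supports n. w s \<noteq> 0 \<longrightarrow> supp_size n s \<le> b) \<and>
       (\<forall>s\<in>supports n. \<forall>i<n. fixed_bit p i \<and> s ! i \<noteq> None \<longrightarrow> u s = 0 \<and> w s = 0) \<and>
       (\<forall>x\<in>cube n. \<not> f x \<longrightarrow>
          (\<Sum>s\<in>{s\<in>supports n. x \<in> subcube n s}. u s) \<ge> 1 - \<alpha>0) \<and>
       (\<forall>x\<in>cube n. f x \<longrightarrow>
          (\<Sum>s\<in>{s\<in>supports n. x \<in> subcube n s}. u s) \<le> \<beta>0) \<and>
       (\<Sum>s\<in>supports n. mu_z n p f True (subcube n s) * w s)
          \<ge> (1 - \<alpha>1) * mu_z n p f True (cube n) \<and>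
       (\<forall>x\<in>cube n. (\<Sum>s\<in>{s\<in>supports n. x \<in> subcube n s}. w s) \<le> 1) \<and>
       (\<forall>x\<in>cube n. \<not> f x \<longrightarrow>
          (\<Sum>s\<in>{s\<in>supports n. x \<in> subcube n s}. w s) \<le> \<beta>1))"

datatype dtree = Leaf bool | Node nat dtree dtree

fun dt_eval :: "dtree \<Rightarrow> bool list \<Rightarrow> bool" where
  "dt_eval (Leaf c) x = c"
| "dt_eval (Node i l r) x = (if x ! i then dt_eval r x else dt_eval l x)"

fun dt_depth :: "dtree \<Rightarrow> nat" where
  "dt_depth (Leaf c) = 0"
| "dt_depth (Node i l r) = Suc (max (dt_depth l) (dt_depth r))"

fun dt_vars :: "dtree \<Rightarrow> nat set" where
  "dt_vars (Leaf c) = {}"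
| "dt_vars (Node i l r) = insert i (dt_vars l \<union> dt_vars r)"

definition dt_error :: "nat \<Rightarrow> (nat \<Rightarrow> real) \<Rightarrow> (bool list \<Rightarrow> bool) \<Rightarrow> dtree \<Rightarrow> real" where
  "dt_error n p f T = mu n p {x. dt_eval T x \<noteq> f x}"

end

theory Submission
  imports Defs
begin


definition ind :: "nat \<Rightarrow> bool option list \<Rightarrow> bool list \<Rightarrow> real" where
  "ind n \<rho> x = (if x \<in> subcube n \<rho> then 1 else 0)"
definition pv :: "(nat\<Rightarrow>real) \<Rightarrow> nat \<Rightarrow> bool \<Rightarrow> real" where
  "pv p i v = (if v then p i else 1 - p i)"
definition okc :: "bool option list \<Rightarrow> nat \<Rightarrow> bool \<Rightarrow> real" where
  "okc \<rho> i v = (if \<rho>!i = None \<or> \<rho>!i = Some v then 1 else 0)"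

lemma finite_cube: "finite (cube n)"
  using finite_lists_length_eq[of "UNIV::bool set" n] by (simp add: cube_def)
lemma finite_supports: "finite (supports n)"
  using finite_lists_length_eq[of "UNIV::bool option set" n] by (simp add: supports_def)

lemma cube_Suc: "cube (Suc n) = (\<lambda>(x,v). x@[v]) ` (cube n \<times> UNIV)"
proof -
  have "x \<in> (\<lambda>(x,v). x@[v]) ` (cube n \<times> UNIV)" if "length x = Suc n" for x
  proof -
    have "x = butlast x @ [last x]" using that
      by (metis append_butlast_last_id list.size(3) nat.distinct(1))
    moreover have "butlast x \<in> cube n" using that by (simp add: cube_def)
    ultimately show ?thesis by (metis (no_types, lifting) UNIV_I case_prod_conv image_iff mem_Sigma_iff)
  qed
  then show ?thesis by (auto simp: cube_def)
qed

lemma sum_cube_prod: "(\<Sum>x\<in>cube n. \<Prod>i<n. g i (x!i)) = (\<Prod>i<n. g i True + g i False :: real)"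
proof (induction n)
  case 0
  have "cube 0 = {[]}" by (auto simp: cube_def)
  then show ?case by simp
next
  case (Suc n)
  have inj: "inj_on (\<lambda>(x,v). x@[v]) (cube n \<times> (UNIV::bool set))"
    by (auto simp: inj_on_def)
  have "(\<Sum>x\<in>cube (Suc n). \<Prod>i<Suc n. g i (x!i))
      = (\<Sum>(x,v)\<in>cube n \<times> UNIV. \<Prod>i<Suc n. g i ((x@[v])!i))"
    unfolding cube_Suc by (subst sum.reindex[OF inj]) (simp add: case_prod_beta)
  also have "\<dots> = (\<Sum>x\<in>cube n. \<Sum>v\<in>UNIV. (\<Prod>i<n. g i (x!i)) * g n v)"
  proof -
    have "\<And>x v. x \<in> cube n \<Longrightarrow> (\<Prod>i<Suc n. g i ((x@[v])!i)) = (\<Prod>i<n. g i (x!i)) * g n v"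
      by (simp add: prod.lessThan_Suc nth_append cube_def)
    then show ?thesis by (simp add: sum.cartesian_product[symmetric] )
  qed
  also have "\<dots> = (\<Sum>x\<in>cube n. (\<Prod>i<n. g i (x!i)) * (g n True + g n False))"
    by (simp add: UNIV_bool algebra_simps)
  also have "\<dots> = (\<Sum>x\<in>cube n. (\<Prod>i<n. g i (x!i))) * (g n True + g n False)"
    by (simp add: sum_distrib_right)
  also have "\<dots> = (\<Prod>i<Suc n. g i True + g i False)"
    using Suc by (simp add: prod.lessThan_Suc)
  finally show ?case .
qed

lemma prod_ind: "finite A \<Longrightarrow> (\<Prod>i\<in>A. if P i then 1 else 0::real) = (if \<forall>i\<in>A. P i then 1 else 0)"
  by (induction A rule: finite_induct) auto

lemma subcube_iff: assumes "x \<in> cube n" shows "x \<in> subcube n \<rho> \<longleftrightarrow> (\<forall>i<n. \<rho>!i = None \<or> \<rho>!i = Some (x!i))"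
proof -
  have "(\<rho>!i \<noteq> None \<longrightarrow> x!i = the(\<rho>!i)) \<longleftrightarrow> (\<rho>!i = None \<or> \<rho>!i = Some (x!i))" for i
    by (cases "\<rho>!i") auto
  then show ?thesis using assms by (simp add: subcube_def)
qed

lemma ind_prod: "x \<in> cube n \<Longrightarrow> ind n \<rho> x = (\<Prod>i<n. okc \<rho> i (x!i))"
  unfolding ind_def okc_def by (subst prod_ind) (auto simp: subcube_iff)

lemma mu_pt_prod: "mu_pt n p x = (\<Prod>i<n. pv p i (x!i))"
  unfolding mu_pt_def pv_def ..


lemma sub_upd:
  assumes "length \<rho> = n" "i < n" "\<rho>!i = None" "x \<in> cube n"
  shows "x \<in> subcube n (\<rho>[i:=Some v]) \<longleftrightarrow> x \<in> subcube n \<rho> \<and> x!i = v"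
  using assms by (auto simp: subcube_iff nth_list_update)

lemma ind_upd:
  assumes "length \<rho> = n" "i < n" "\<rho>!i = None" "x \<in> cube n"
  shows "ind n (\<rho>[i:=Some v]) x = (if x \<in> subcube n \<rho> \<and> x!i = v then 1 else 0)"
  using sub_upd[OF assms] by (simp add: ind_def)

lemma ind_split:
  assumes "length \<rho> = n" "i < n" "\<rho>!i = None" "x \<in> cube n"
  shows "ind n \<rho> x = ind n (\<rho>[i:=Some False]) x + ind n (\<rho>[i:=Some True]) x"
  using ind_upd[OF assms] by (cases "x!i") (auto simp: ind_def)

lemma sum_split:
  assumes "length \<rho> = n" "i < n" "\<rho>!i = None"
  shows "(\<Sum>x\<in>cube n. ind n \<rho> x * h x) =
     (\<Sum>x\<in>cube n. ind n (\<rho>[i:=Some False]) x * h x) + (\<Sum>x\<in>cube n. ind n (\<rho>[i:=Some True]) x * h x)"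
proof -
  have "(\<Sum>x\<in>cube n. ind n \<rho> x * h x) = (\<Sum>x\<in>cube n. ind n (\<rho>[i:=Some False]) x * h x + ind n (\<rho>[i:=Some True]) x * h x)"
    by (rule sum.cong) (auto simp: ind_split[OF assms] algebra_simps)
  then show ?thesis by (simp add: sum.distrib)
qed

lemma ind_nn: "0 \<le> ind n \<rho> x" by (simp add: ind_def)

lemma sum_split_le:
  assumes "length \<rho> = n" "i < n" "\<rho>!i = None"
    and "\<And>x. x \<in> cube n \<Longrightarrow> hF x \<le> h x" "\<And>x. x \<in> cube n \<Longrightarrow> hT x \<le> h x"
  shows "(\<Sum>x\<in>cube n. ind n (\<rho>[i:=Some False]) x * hF x) + (\<Sum>x\<in>cube n. ind n (\<rho>[i:=Some True]) x * hT x)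
     \<le> (\<Sum>x\<in>cube n. ind n \<rho> x * h x)"
proof -
  have "(\<Sum>x\<in>cube n. ind n (\<rho>[i:=Some False]) x * hF x) \<le> (\<Sum>x\<in>cube n. ind n (\<rho>[i:=Some False]) x * h x)"
    by (rule sum_mono) (simp add: assms(4) ind_nn mult_left_mono)
  moreover have "(\<Sum>x\<in>cube n. ind n (\<rho>[i:=Some True]) x * hT x) \<le> (\<Sum>x\<in>cube n. ind n (\<rho>[i:=Some True]) x * h x)"
    by (rule sum_mono) (simp add: assms(5) ind_nn mult_left_mono)
  ultimately show ?thesis using sum_split[OF assms(1-3), of h] by linarith
qed

lemma free_set_upd:
  assumes "length \<rho> = n" "i < n" "\<rho>!i = None"
  shows "{j. j<n \<and> s!j \<noteq> None \<and> \<rho>[i:=Some v]!j = None} = {j. j<n \<and> s!j \<noteq> None \<and> \<rho>!j = None} - {i}"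
  using assms by (auto simp: nth_list_update)

lemma card_free_upd:
  assumes "length \<rho> = n" "i < n" "\<rho>!i = None"
  shows "card {j. j<n \<and> s!j \<noteq> None \<and> \<rho>[i:=Some v]!j = None} =
     card {j. j<n \<and> s!j \<noteq> None \<and> \<rho>!j = None} - (if s!i \<noteq> None then 1 else 0)"
  unfolding free_set_upd[OF assms] card_Diff_singleton_if using assms by auto

lemma coord_ineq:
  fixes q :: real
  assumes "0 \<le> q" "q \<le> 1" "R!i \<noteq> None \<longrightarrow> s!i \<noteq> None \<longrightarrow> R!i = s!i"
  shows "(okc r i True * okc R i True * q + okc r i False * okc R i False * (1-q)) *
         (okc r i True * okc s i True * q + okc r i False * okc s i False * (1-q))
       \<le> (okc r i True * q + okc r i False * (1-q)) *
         (okc r i True * okc R i True * okc s i True * q + okc r i False * okc R i False * okc s i False * (1-q))"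
  using assms
  by (cases "R!i"; cases "s!i"; cases "r!i") (auto simp: okc_def algebra_simps mult_le_cancel_left1 mult_le_cancel_right1 mult_right_le_one_le)



locale L =
  fixes n :: nat and p :: "nat \<Rightarrow> real" and f :: "bool list \<Rightarrow> bool"
    and u w :: "bool option list \<Rightarrow> real"
    and \<alpha>0 \<beta>0 \<beta>1 \<delta>' :: real and a b :: nat
  assumes pd: "prod_dist n p"
    and u_nn: "\<forall>s\<in>supports n. 0 \<le> u s" and w_nn: "\<forall>s\<in>supports n. 0 \<le> w s"
    and u_supp: "\<forall>s\<in>supports n. u s \<noteq> 0 \<longrightarrow> supp_size n s \<le> a"
    and w_supp: "\<forall>s\<in>supports n. w s \<noteq> 0 \<longrightarrow> supp_size n s \<le> b"
    and zc: "\<forall>x\<in>cube n. \<not> f x \<longrightarrow> (\<Sum>s\<in>supports n. ind n s x * u s) \<ge> 1 - \<alpha>0"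
    and one_u: "\<forall>x\<in>cube n. f x \<longrightarrow> (\<Sum>s\<in>supports n. ind n s x * u s) \<le> \<beta>0"
    and w_le1: "\<forall>x\<in>cube n. (\<Sum>s\<in>supports n. ind n s x * w s) \<le> 1"
    and zero_w: "\<forall>x\<in>cube n. \<not> f x \<longrightarrow> (\<Sum>s\<in>supports n. ind n s x * w s) \<le> \<beta>1"
    and a0: "\<alpha>0 < 1" and b0: "0 \<le> \<beta>0" and b1: "0 \<le> \<beta>1" and dp: "0 < \<delta>'"
begin

definition "U x = (\<Sum>s\<in>supports n. ind n s x * u s)"
definition "W x = (\<Sum>s\<in>supports n. ind n s x * w s)"
definition "mp x = mu_pt n p x"
definition "c = \<beta>1 + \<beta>0 / ((1-\<alpha>0)*\<delta>')"
definition "M \<rho> = (\<Sum>x\<in>cube n. ind n \<rho> x * mp x)"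
definition "M0 \<rho> = (\<Sum>x\<in>cube n. ind n \<rho> x * (if f x then 0 else mp x))"
definition "M1 \<rho> = (\<Sum>x\<in>cube n. ind n \<rho> x * (if f x then mp x else 0))"
definition "D \<rho> = (\<Sum>x\<in>cube n. ind n \<rho> x * (if f x then mp x * (1 - W x) else 0))"
definition "free \<rho> s = card {i. i<n \<and> s!i \<noteq> None \<and> \<rho>!i = None}"
definition "qq (k::nat) \<rho> y = (\<Sum>s\<in>supports n. ind n s y * (if free \<rho> s > k then w s else 0))"
definition "Q k \<rho> = (\<Sum>y\<in>cube n. ind n \<rho> y * (if f y then mp y * qq k \<rho> y else 0))"
definition "cons R s = (\<forall>i<n. R!i \<noteq> None \<longrightarrow> s!i \<noteq> None \<longrightarrow> R!i = s!i)"
definition "ee R \<rho> s = (\<exists>j<n. R!j \<noteq> None \<and> s!j \<noteq> None \<and> R!j \<noteq> s!j \<and> \<rho>!j = None)"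
definition "qr R (k::nat) \<rho> y = (\<Sum>s\<in>supports n. ind n s y * (if free \<rho> s > k + (if ee R \<rho> s then 1 else (0::nat)) then w s else 0))"
definition "QR R k \<rho> = (\<Sum>y\<in>cube n. ind n \<rho> y * (if f y then mp y * qr R k \<rho> y else 0))"
definition "bd R y = (\<Sum>s\<in>supports n. ind n s y * (if cons R s then w s else 0))"
definition "Bd R \<rho> = (\<Sum>y\<in>cube n. ind n \<rho> y * (if f y then mp y * bd R y else 0))"
definition "err T \<rho> = (\<Sum>x\<in>cube n. ind n \<rho> x * (if dt_eval T x \<noteq> f x then mp x else 0))"
definition "Phi k \<rho> = \<delta>' * M \<rho> + D \<rho> + \<beta>1 * M1 \<rho> + Q k \<rho> + real k * c * M \<rho>"
definition "Psi R k \<rho> = \<delta>' * M \<rho> + D \<rho> + \<beta>1 * M1 \<rho> + QR R k \<rho> + real k * c * M \<rho>"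
definition "fr R \<rho> = card {i. i<n \<and> R!i \<noteq> None \<and> \<rho>!i = None}"
definition "fv \<rho> = {i. i<n \<and> \<rho>!i = None}"

lemma mp_nn: "0 \<le> mp x"
  unfolding mp_def mu_pt_prod using pd
  by (auto simp: prod_dist_def pv_def intro!: prod_nonneg)

lemma U_nn: "0 \<le> U x" unfolding U_def using u_nn by (auto intro!: sum_nonneg simp: ind_nn)
lemma W_nn: "0 \<le> W x" unfolding W_def using w_nn by (auto intro!: sum_nonneg simp: ind_nn)
lemma c_nn: "0 \<le> c" unfolding c_def using a0 b0 b1 dp by (auto intro!: divide_nonneg_pos)

lemma M_nn: "0 \<le> M \<rho>" unfolding M_def by (auto intro!: sum_nonneg simp: ind_nn mp_nn)
lemma M0_nn: "0 \<le> M0 \<rho>" unfolding M0_def by (auto intro!: sum_nonneg simp: ind_nn mp_nn)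
lemma M1_nn: "0 \<le> M1 \<rho>" unfolding M1_def by (auto intro!: sum_nonneg simp: ind_nn mp_nn)
lemma M01: "M \<rho> = M0 \<rho> + M1 \<rho>"
  unfolding M_def M0_def M1_def sum.distrib[symmetric] by (rule sum.cong) (auto simp: algebra_simps)
lemma D_nn: "0 \<le> D \<rho>" unfolding D_def using w_le1
  by (auto intro!: sum_nonneg mult_nonneg_nonneg simp: ind_nn mp_nn W_def)
lemma qq_nn: "0 \<le> qq k \<rho> y" unfolding qq_def using w_nn by (auto intro!: sum_nonneg simp: ind_nn)
lemma qr_nn: "0 \<le> qr R k \<rho> y" unfolding qr_def using w_nn by (auto intro!: sum_nonneg simp: ind_nn)
lemma Q_nn: "0 \<le> Q k \<rho>" unfolding Q_def by (auto intro!: sum_nonneg mult_nonneg_nonneg simp: ind_nn mp_nn qq_nn)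

lemma Phi_nn: "\<delta>' * M \<rho> \<le> Phi k \<rho>"
  unfolding Phi_def using D_nn[of \<rho>] M1_nn[of \<rho>] Q_nn[of k \<rho>] c_nn M_nn[of \<rho>] b1
  by (simp add: mult_nonneg_nonneg)

lemma free_upd:
  assumes "length \<rho> = n" "i < n" "\<rho>!i = None"
  shows "free (\<rho>[i:=Some v]) s = free \<rho> s - (if s!i \<noteq> None then 1 else 0)"
  unfolding free_def using card_free_upd[OF assms] .

lemma ee_upd:
  assumes "length \<rho> = n" "i < n" "\<rho>!i = None"
  shows "ee R (\<rho>[i:=Some v]) s \<longleftrightarrow> (\<exists>j<n. R!j \<noteq> None \<and> s!j \<noteq> None \<and> R!j \<noteq> s!j \<and> \<rho>!j = None \<and> j \<noteq> i)"
  unfolding ee_def using assms by (auto simp: nth_list_update)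

lemma free_pos:
  assumes "i < n" "s!i \<noteq> None" "\<rho>!i = None"
  shows "free \<rho> s \<ge> 1"
proof -
  have "0 < card {i. i<n \<and> s!i \<noteq> None \<and> \<rho>!i = None}"
    by (subst card_gt_0_iff) (use assms in auto)
  then show ?thesis unfolding free_def by simp
qed

lemma free_le:
  assumes "length \<rho> = n" "i < n" "\<rho>!i = None"
  shows "free (\<rho>[i:=Some v]) s \<le> free \<rho> s"
  using free_upd[OF assms, of v s] by simp

lemma qr_mono:
  assumes "length \<rho> = n" "i < n" "\<rho>!i = None"
  shows "qr R k (\<rho>[i:=Some v]) y \<le> qr R k \<rho> y"
  unfolding qr_def
proof (rule sum_mono)
  fix s assume s: "s \<in> supports n"
  have w0: "0 \<le> w s" using w_nn s by blast
  have impl: "(k + (if ee R (\<rho>[i:=Some v]) s then 1 else 0) < free (\<rho>[i:=Some v]) s) \<longrightarrow>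
        (k + (if ee R \<rho> s then 1 else 0) < free \<rho> s)"
  proof (cases "ee R \<rho> s = ee R (\<rho>[i:=Some v]) s")
    case True
    have "free (\<rho>[i:=Some v]) s \<le> free \<rho> s" by (rule free_le[OF assms])
    then show ?thesis using True by simp
  next
    case False
    have e1: "ee R \<rho> s \<or> ee R (\<rho>[i:=Some v]) s" using False by blast
    have e2: "ee R (\<rho>[i:=Some v]) s \<Longrightarrow> ee R \<rho> s"
      unfolding ee_upd[OF assms] unfolding ee_def by blast
    have e3: "ee R \<rho> s" using e1 e2 by blast
    have e4: "\<not> ee R (\<rho>[i:=Some v]) s" using False e3 by blast
    obtain j where j: "j<n" "R!j \<noteq> None" "s!j \<noteq> None" "R!j \<noteq> s!j" "\<rho>!j = None"
      using e3 unfolding ee_def by blast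
    have "j = i" using e4 j unfolding ee_upd[OF assms] by blast
    then have si: "s!i \<noteq> None" using j by simp
    have f1: "free (\<rho>[i:=Some v]) s = free \<rho> s - 1" using free_upd[OF assms, of v s] si by simp
    have f2: "free \<rho> s \<ge> 1" by (rule free_pos[OF assms(2) si assms(3)])
    show ?thesis using f1 f2 e3 e4 by simp arith
  qed
  show "ind n s y * (if k + (if ee R (\<rho>[i:=Some v]) s then 1 else 0) < free (\<rho>[i:=Some v]) s then w s else 0)
       \<le> ind n s y * (if k + (if ee R \<rho> s then 1 else 0) < free \<rho> s then w s else 0)"
    using w0 impl by (simp add: ind_def)
qed

lemma sub_upd_len: "length (\<rho>[i:=v]) = length \<rho>" by simp

lemma Psi_split:
  assumes "length \<rho> = n" "i < n" "\<rho>!i = None"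
  shows "Psi R k (\<rho>[i:=Some False]) + Psi R k (\<rho>[i:=Some True]) \<le> Psi R k \<rho>"
proof -
  have m: "M (\<rho>[i:=Some False]) + M (\<rho>[i:=Some True]) = M \<rho>"
    unfolding M_def using sum_split[OF assms] by simp
  have d: "D (\<rho>[i:=Some False]) + D (\<rho>[i:=Some True]) = D \<rho>"
    unfolding D_def using sum_split[OF assms] by simp
  have m1: "M1 (\<rho>[i:=Some False]) + M1 (\<rho>[i:=Some True]) = M1 \<rho>"
    unfolding M1_def using sum_split[OF assms] by simp
  have q: "QR R k (\<rho>[i:=Some False]) + QR R k (\<rho>[i:=Some True]) \<le> QR R k \<rho>"
    unfolding QR_def
    by (rule sum_split_le[OF assms]) (auto intro!: mult_left_mono qr_mono[OF assms] simp: mp_nn)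
  have "Psi R k (\<rho>[i:=Some False]) + Psi R k (\<rho>[i:=Some True]) =
    \<delta>' * (M (\<rho>[i:=Some False]) + M (\<rho>[i:=Some True])) + (D (\<rho>[i:=Some False]) + D (\<rho>[i:=Some True]))
     + \<beta>1 * (M1 (\<rho>[i:=Some False]) + M1 (\<rho>[i:=Some True])) + (QR R k (\<rho>[i:=Some False]) + QR R k (\<rho>[i:=Some True]))
     + real k * c * (M (\<rho>[i:=Some False]) + M (\<rho>[i:=Some True]))"
    unfolding Psi_def by (simp add: algebra_simps)
  also have "\<dots> = \<delta>' * M \<rho> + D \<rho> + \<beta>1 * M1 \<rho> + (QR R k (\<rho>[i:=Some False]) + QR R k (\<rho>[i:=Some True])) + real k * c * M \<rho>"
    by (simp only: m d m1)
  also have "\<dots> \<le> Psi R k \<rho>" unfolding Psi_def using q by simp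
  finally show ?thesis .
qed

lemma err_node:
  assumes "length \<rho> = n" "i < n" "\<rho>!i = None"
  shows "err (Node i l r) \<rho> = err l (\<rho>[i:=Some False]) + err r (\<rho>[i:=Some True])"
proof -
  have "err (Node i l r) \<rho> = (\<Sum>x\<in>cube n. ind n (\<rho>[i:=Some False]) x * (if dt_eval l x \<noteq> f x then mp x else 0)
     + ind n (\<rho>[i:=Some True]) x * (if dt_eval r x \<noteq> f x then mp x else 0))"
    unfolding err_def
  proof (rule sum.cong)
    fix x assume x: "x \<in> cube n"
    show "ind n \<rho> x * (if dt_eval (Node i l r) x \<noteq> f x then mp x else 0) =
      ind n (\<rho>[i:=Some False]) x * (if dt_eval l x \<noteq> f x then mp x else 0)
     + ind n (\<rho>[i:=Some True]) x * (if dt_eval r x \<noteq> f x then mp x else 0)"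
      unfolding ind_upd[OF assms x] ind_def[of n \<rho> x] by (cases "x!i") simp_all
  qed simp
  then show ?thesis unfolding err_def by (simp add: sum.distrib)
qed


lemma fr_upd:
  assumes "length \<rho> = n" "i < n" "\<rho>!i = None" "R!i \<noteq> None"
  shows "fr R (\<rho>[i:=Some v]) = fr R \<rho> - 1"
  unfolding fr_def using card_free_upd[OF assms(1-3), of R v] assms(4) by simp

lemma QR_eq_Q:
  assumes "fr R \<rho> = 0"
  shows "QR R k \<rho> = Q k \<rho>"
proof -
  have "{i. i<n \<and> R!i \<noteq> None \<and> \<rho>!i = None} = {}"
    using assms unfolding fr_def by simp
  then have e: "ee R \<rho> s = False" for s unfolding ee_def by blast
  show ?thesis unfolding QR_def Q_def qr_def qq_def e if_False add_0_right ..
qed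

lemma round:
  assumes IH: "\<And>\<rho>. length \<rho> = n \<Longrightarrow> \<exists>T. dt_vars T \<subseteq> fv \<rho> \<and> dt_depth T \<le> a*k \<and> err T \<rho> \<le> Phi k \<rho>"
  shows "length \<rho> = n \<Longrightarrow> \<exists>T. dt_vars T \<subseteq> fv \<rho> \<and> dt_depth T \<le> fr R \<rho> + a*k \<and> err T \<rho> \<le> Psi R k \<rho>"
proof (induction "fr R \<rho>" arbitrary: \<rho> rule: less_induct)
  case less
  show ?case
  proof (cases "fr R \<rho> = 0")
    case True
    then have "Psi R k \<rho> = Phi k \<rho>" using QR_eq_Q unfolding Psi_def Phi_def by simp
    then show ?thesis using IH[OF less.prems] True by simp
  next
    case False
    then have "{i. i<n \<and> R!i \<noteq> None \<and> \<rho>!i = None} \<noteq> {}" unfolding fr_def by (metis card.empty)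
    then obtain i where i: "i<n" "R!i \<noteq> None" "\<rho>!i = None" by blast
    have lF: "length (\<rho>[i:=Some False]) = n" and lT: "length (\<rho>[i:=Some True]) = n"
      using less.prems by simp_all
    have frF: "fr R (\<rho>[i:=Some False]) = fr R \<rho> - 1" and frT: "fr R (\<rho>[i:=Some True]) = fr R \<rho> - 1"
      using fr_upd[OF less.prems i(1) i(3) i(2)] by auto
    obtain TF where TF: "dt_vars TF \<subseteq> fv (\<rho>[i:=Some False])" "dt_depth TF \<le> fr R (\<rho>[i:=Some False]) + a*k"
        "err TF (\<rho>[i:=Some False]) \<le> Psi R k (\<rho>[i:=Some False])"
      using less.hyps[OF _ lF] frF False by force
    obtain TT where TT: "dt_vars TT \<subseteq> fv (\<rho>[i:=Some True])" "dt_depth TT \<le> fr R (\<rho>[i:=Some True]) + a*k"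
        "err TT (\<rho>[i:=Some True]) \<le> Psi R k (\<rho>[i:=Some True])"
      using less.hyps[OF _ lT] frT False by force
    have fvs: "fv (\<rho>[i:=Some v]) \<subseteq> fv \<rho>" for v unfolding fv_def using less.prems i
      by (auto simp: nth_list_update)
    show ?thesis
    proof (intro exI conjI)
      show "dt_vars (Node i TF TT) \<subseteq> fv \<rho>" using TF(1) TT(1) fvs[of False] fvs[of True] i
        by (auto simp: fv_def)
      show "dt_depth (Node i TF TT) \<le> fr R \<rho> + a*k" using TF(2) TT(2) frF frT False by simp
      show "err (Node i TF TT) \<rho> \<le> Psi R k \<rho>"
        using err_node[OF less.prems i(1) i(3), of TF TT] TF(3) TT(3) Psi_split[OF less.prems i(1) i(3), of R k]
        by linarith
    qed
  qed
qed

definition "MR X \<rho> = (\<Sum>x\<in>cube n. ind n \<rho> x * ind n X x * mp x)"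
definition "MRS X Y \<rho> = (\<Sum>x\<in>cube n. ind n \<rho> x * ind n X x * ind n Y x * mp x)"

lemma MR_nn: "0 \<le> MR X \<rho>" unfolding MR_def by (auto intro!: sum_nonneg simp: ind_nn mp_nn)
lemma MRS_nn: "0 \<le> MRS X Y \<rho>" unfolding MRS_def by (auto intro!: sum_nonneg simp: ind_nn mp_nn)

lemma M_prod: "M \<rho> = (\<Prod>i<n. okc \<rho> i True * p i + okc \<rho> i False * (1 - p i))"
proof -
  have "M \<rho> = (\<Sum>x\<in>cube n. \<Prod>i<n. okc \<rho> i (x!i) * pv p i (x!i))"
    unfolding M_def mp_def mu_pt_prod by (rule sum.cong) (simp_all add: ind_prod prod.distrib)
  also have "\<dots> = (\<Prod>i<n. okc \<rho> i True * p i + okc \<rho> i False * (1 - p i))"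
    by (subst sum_cube_prod) (simp add: pv_def)
  finally show ?thesis .
qed

lemma MR_prod: "MR X \<rho> = (\<Prod>i<n. okc \<rho> i True * okc X i True * p i + okc \<rho> i False * okc X i False * (1 - p i))"
proof -
  have "MR X \<rho> = (\<Sum>x\<in>cube n. \<Prod>i<n. okc \<rho> i (x!i) * okc X i (x!i) * pv p i (x!i))"
    unfolding MR_def mp_def mu_pt_prod by (rule sum.cong) (simp_all add: ind_prod prod.distrib)
  then show ?thesis by (subst (asm) sum_cube_prod) (simp add: pv_def)
qed

lemma MRS_prod: "MRS X Y \<rho> = (\<Prod>i<n. okc \<rho> i True * okc X i True * okc Y i True * p i
     + okc \<rho> i False * okc X i False * okc Y i False * (1 - p i))"
proof -
  have "MRS X Y \<rho> = (\<Sum>x\<in>cube n. \<Prod>i<n. okc \<rho> i (x!i) * okc X i (x!i) * okc Y i (x!i) * pv p i (x!i))"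
    unfolding MRS_def mp_def mu_pt_prod by (rule sum.cong) (simp_all add: ind_prod prod.distrib)
  then show ?thesis by (subst (asm) sum_cube_prod) (simp add: pv_def)
qed

lemma okc_nn: "0 \<le> okc r i v" by (simp add: okc_def)

lemma prod_ineq:
  assumes "cons X Y"
  shows "MR X \<rho> * MR Y \<rho> \<le> M \<rho> * MRS X Y \<rho>"
proof -
  have pp: "0 \<le> p i" "p i \<le> 1" if "i < n" for i using pd that by (auto simp: prod_dist_def)
  define A where "A = (\<lambda>i. okc \<rho> i True * okc X i True * p i + okc \<rho> i False * okc X i False * (1 - p i))"
  define B where "B = (\<lambda>i. okc \<rho> i True * okc Y i True * p i + okc \<rho> i False * okc Y i False * (1 - p i))"
  define C where "C = (\<lambda>i. okc \<rho> i True * p i + okc \<rho> i False * (1 - p i))"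
  define E where "E = (\<lambda>i. okc \<rho> i True * okc X i True * okc Y i True * p i + okc \<rho> i False * okc X i False * okc Y i False * (1 - p i))"
  have key: "0 \<le> A i * B i \<and> A i * B i \<le> C i * E i" if "i \<in> {..<n}" for i
  proof
    have i: "i < n" using that by simp
    show "0 \<le> A i * B i" unfolding A_def B_def
      using pp[OF i] by (intro mult_nonneg_nonneg add_nonneg_nonneg) (simp_all add: okc_nn)
    show "A i * B i \<le> C i * E i" unfolding A_def B_def C_def E_def
      by (rule coord_ineq[OF pp[OF i]]) (use assms i in \<open>simp add: cons_def\<close>)
  qed
  have "MR X \<rho> * MR Y \<rho> = (\<Prod>i<n. A i * B i)" by (simp add: MR_prod prod.distrib A_def B_def)
  also have "\<dots> \<le> (\<Prod>i<n. C i * E i)" by (rule prod_mono) (use key in blast)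
  also have "\<dots> = M \<rho> * MRS X Y \<rho>" by (simp add: M_prod MRS_prod prod.distrib C_def E_def)
  finally show ?thesis .
qed


definition "Z0 \<rho> = (\<Sum>x\<in>cube n. ind n \<rho> x * (if f x then 0 else mp x * U x))"
definition "Den \<rho> = (\<Sum>R\<in>supports n. u R * MR R \<rho>)"
definition "Num \<rho> = (\<Sum>R\<in>supports n. u R * MR R \<rho> * Bd R \<rho>)"

lemma bd_nn: "0 \<le> bd R y" unfolding bd_def using w_nn by (auto intro!: sum_nonneg simp: ind_nn)
lemma Bd_nn: "0 \<le> Bd R \<rho>" unfolding Bd_def by (auto intro!: sum_nonneg mult_nonneg_nonneg simp: ind_nn mp_nn bd_nn)

lemma Bd_le: "Bd R \<rho> \<le> (\<Sum>s\<in>supports n. (if cons R s then w s else 0) * MR s \<rho>)"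
proof -
  have "Bd R \<rho> \<le> (\<Sum>y\<in>cube n. ind n \<rho> y * mp y * bd R y)"
    unfolding Bd_def
  proof (rule sum_mono)
    fix y
    have "0 \<le> ind n \<rho> y * mp y * bd R y" by (simp add: ind_nn mp_nn bd_nn)
    then show "ind n \<rho> y * (if f y then mp y * bd R y else 0) \<le> ind n \<rho> y * mp y * bd R y"
      by (simp add: mult.assoc)
  qed
  also have "\<dots> = (\<Sum>y\<in>cube n. \<Sum>s\<in>supports n. (if cons R s then w s else 0) * (ind n \<rho> y * ind n s y * mp y))"
    unfolding bd_def by (simp add: sum_distrib_left mult_ac)
  also have "\<dots> = (\<Sum>s\<in>supports n. \<Sum>y\<in>cube n. (if cons R s then w s else 0) * (ind n \<rho> y * ind n s y * mp y))"
    by (rule sum.swap)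
  also have "\<dots> = (\<Sum>s\<in>supports n. (if cons R s then w s else 0) * MR s \<rho>)"
    unfolding MR_def by (simp add: sum_distrib_left)
  finally show ?thesis .
qed

lemma Num_le: "Num \<rho> \<le> M \<rho> * (\<Sum>x\<in>cube n. ind n \<rho> x * mp x * U x * W x)"
proof -
  have "Num \<rho> \<le> (\<Sum>R\<in>supports n. u R * MR R \<rho> * (\<Sum>s\<in>supports n. (if cons R s then w s else 0) * MR s \<rho>))"
    unfolding Num_def
  proof (rule sum_mono)
    fix R assume "R \<in> supports n"
    then have "0 \<le> u R * MR R \<rho>" using u_nn MR_nn by simp
    then show "u R * MR R \<rho> * Bd R \<rho> \<le> u R * MR R \<rho> * (\<Sum>s\<in>supports n. (if cons R s then w s else 0) * MR s \<rho>)"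
      by (rule mult_left_mono[OF Bd_le])
  qed
  also have "\<dots> = (\<Sum>R\<in>supports n. \<Sum>s\<in>supports n. u R * w s * (if cons R s then MR R \<rho> * MR s \<rho> else 0))"
    by (auto simp: sum_distrib_left mult_ac intro!: sum.cong)
  also have "\<dots> \<le> (\<Sum>R\<in>supports n. \<Sum>s\<in>supports n. u R * w s * (M \<rho> * MRS R s \<rho>))"
  proof (intro sum_mono)
    fix R s assume R: "R \<in> supports n" and s: "s \<in> supports n"
    have uw: "0 \<le> u R * w s" using u_nn w_nn R s by simp
    have "(if cons R s then MR R \<rho> * MR s \<rho> else 0) \<le> M \<rho> * MRS R s \<rho>"
      using prod_ineq[of R s \<rho>] M_nn[of \<rho>] MRS_nn[of R s \<rho>] by simp
    then show "u R * w s * (if cons R s then MR R \<rho> * MR s \<rho> else 0) \<le> u R * w s * (M \<rho> * MRS R s \<rho>)"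
      by (rule mult_left_mono[OF _ uw])
  qed
  also have "\<dots> = M \<rho> * (\<Sum>R\<in>supports n. \<Sum>s\<in>supports n. \<Sum>x\<in>cube n.
      ind n \<rho> x * mp x * (ind n R x * u R) * (ind n s x * w s))"
    unfolding MRS_def by (simp add: sum_distrib_left mult_ac)
  also have "(\<Sum>R\<in>supports n. \<Sum>s\<in>supports n. \<Sum>x\<in>cube n.
      ind n \<rho> x * mp x * (ind n R x * u R) * (ind n s x * w s)) =
      (\<Sum>R\<in>supports n. \<Sum>x\<in>cube n. \<Sum>s\<in>supports n.
      ind n \<rho> x * mp x * (ind n R x * u R) * (ind n s x * w s))"
    by (rule sum.cong[OF refl]) (rule sum.swap)
  also have "\<dots> = (\<Sum>x\<in>cube n. \<Sum>R\<in>supports n. \<Sum>s\<in>supports n.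
      ind n \<rho> x * mp x * (ind n R x * u R) * (ind n s x * w s))"
    by (rule sum.swap)
  also have "\<dots> = (\<Sum>x\<in>cube n. ind n \<rho> x * mp x * U x * W x)"
    unfolding U_def W_def by (simp add: sum_product sum_distrib_left mult_ac)
  finally show ?thesis .
qed

lemma UW_le: "(\<Sum>x\<in>cube n. ind n \<rho> x * mp x * U x * W x) \<le> \<beta>1 * Z0 \<rho> + \<beta>0 * M1 \<rho>"
proof -
  have "(\<Sum>x\<in>cube n. ind n \<rho> x * mp x * U x * W x) \<le>
     (\<Sum>x\<in>cube n. \<beta>1 * (ind n \<rho> x * (if f x then 0 else mp x * U x)) + \<beta>0 * (ind n \<rho> x * (if f x then mp x else 0)))"
  proof (rule sum_mono)
    fix x assume x: "x \<in> cube n"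
    have U0: "0 \<le> U x" by (rule U_nn)
    have W0: "0 \<le> W x" by (rule W_nn)
    have W1: "W x \<le> 1" using w_le1 x unfolding W_def by blast
    have im: "0 \<le> ind n \<rho> x * mp x" by (simp add: ind_nn mp_nn)
    show "ind n \<rho> x * mp x * U x * W x \<le> \<beta>1 * (ind n \<rho> x * (if f x then 0 else mp x * U x)) + \<beta>0 * (ind n \<rho> x * (if f x then mp x else 0))"
    proof (cases "f x")
      case True
      have Ub: "U x \<le> \<beta>0" using one_u x True unfolding U_def by blast
      have "U x * W x \<le> U x * 1" by (rule mult_left_mono[OF W1 U0])
      then have "U x * W x \<le> \<beta>0" using Ub by simp
      then have "ind n \<rho> x * mp x * (U x * W x) \<le> ind n \<rho> x * mp x * \<beta>0" by (rule mult_left_mono[OF _ im])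
      then show ?thesis using True by (simp add: mult_ac)
    next
      case False
      have Wb: "W x \<le> \<beta>1" using zero_w x False unfolding W_def by blast
      have "ind n \<rho> x * mp x * U x * W x \<le> ind n \<rho> x * mp x * U x * \<beta>1"
        by (rule mult_left_mono[OF Wb]) (simp add: im U0)
      then show ?thesis using False by (simp add: mult_ac)
    qed
  qed
  also have "\<dots> = \<beta>1 * Z0 \<rho> + \<beta>0 * M1 \<rho>"
    unfolding Z0_def M1_def by (simp add: sum.distrib sum_distrib_left)
  finally show ?thesis .
qed

lemma Den_eq: "Den \<rho> = (\<Sum>x\<in>cube n. ind n \<rho> x * mp x * U x)"
proof -
  have "Den \<rho> = (\<Sum>R\<in>supports n. \<Sum>x\<in>cube n. ind n \<rho> x * mp x * (ind n R x * u R))"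
    unfolding Den_def MR_def by (simp add: sum_distrib_left mult_ac)
  also have "\<dots> = (\<Sum>x\<in>cube n. \<Sum>R\<in>supports n. ind n \<rho> x * mp x * (ind n R x * u R))"
    by (rule sum.swap)
  also have "\<dots> = (\<Sum>x\<in>cube n. ind n \<rho> x * mp x * U x)"
    unfolding U_def by (simp add: sum_distrib_left)
  finally show ?thesis .
qed

lemma Z0_le_Den: "Z0 \<rho> \<le> Den \<rho>"
  unfolding Den_eq Z0_def
  by (rule sum_mono) (simp add: ind_nn mp_nn U_nn mult.assoc)

lemma Z0_ge: "(1 - \<alpha>0) * M0 \<rho> \<le> Z0 \<rho>"
proof -
  have "(1 - \<alpha>0) * M0 \<rho> = (\<Sum>x\<in>cube n. ind n \<rho> x * (if f x then 0 else (1 - \<alpha>0) * mp x))"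
    unfolding M0_def sum_distrib_left by (rule sum.cong) auto
  also have "\<dots> \<le> Z0 \<rho>" unfolding Z0_def
  proof (rule sum_mono)
    fix x assume x: "x \<in> cube n"
    have "\<not> f x \<Longrightarrow> (1 - \<alpha>0) * mp x \<le> mp x * U x"
      using zc x mult_right_mono[of "1 - \<alpha>0" "U x" "mp x"] mp_nn[of x] unfolding U_def
      by (simp add: mult.commute)
    then show "ind n \<rho> x * (if f x then 0 else (1 - \<alpha>0) * mp x) \<le> ind n \<rho> x * (if f x then 0 else mp x * U x)"
      by (simp add: ind_nn mult_left_mono)
  qed
  finally show ?thesis .
qed

lemma choose_R:
  assumes big: "M0 \<rho> > \<delta>' * M \<rho>"
  shows "\<exists>R\<in>supports n. u R \<noteq> 0 \<and> (\<exists>x\<in>cube n. x \<in> subcube n \<rho> \<and> x \<in> subcube n R) \<and> Bd R \<rho> \<le> c * M \<rho>"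
proof -
  have dM: "0 \<le> \<delta>' * M \<rho>" using dp M_nn[of \<rho>] by simp
  have M0pos: "0 < M0 \<rho>" using big dM by linarith
  have Mpos: "0 < M \<rho>" using M0pos M1_nn[of \<rho>] M01[of \<rho>] by linarith
  define K where "K = (1 - \<alpha>0) * \<delta>'"
  have a1: "0 < 1 - \<alpha>0" using a0 by simp
  have Kpos: "0 < K" unfolding K_def using a1 dp by simp
  have Z0pos: "0 < Z0 \<rho>" using Z0_ge[of \<rho>] a1 M0pos by (smt (verit) mult_pos_pos)
  have Z0K: "K * M \<rho> \<le> Z0 \<rho>"
  proof -
    have "K * M \<rho> = (1 - \<alpha>0) * (\<delta>' * M \<rho>)" unfolding K_def by simp
    also have "\<dots> \<le> (1 - \<alpha>0) * M0 \<rho>" using big a1 by simp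
    finally show ?thesis using Z0_ge[of \<rho>] by linarith
  qed
  have Denpos: "0 < Den \<rho>" using Z0pos Z0_le_Den[of \<rho>] by linarith
  have nn: "\<forall>R\<in>supports n. 0 \<le> u R * MR R \<rho>" using u_nn MR_nn by simp
  have "\<exists>R\<in>supports n. 0 < u R * MR R \<rho> \<and> Bd R \<rho> * Den \<rho> \<le> Num \<rho>"
  proof (rule ccontr)
    assume H: "\<not> ?thesis"
    have ex: "\<exists>R\<in>supports n. 0 < u R * MR R \<rho>"
    proof (rule ccontr)
      assume "\<not> ?thesis"
      then have "\<forall>R\<in>supports n. u R * MR R \<rho> = 0" using nn by force
      then have "Den \<rho> = 0" unfolding Den_def by (intro sum.neutral) blast
      then show False using Denpos by simp
    qed
    have "Den \<rho> * Num \<rho> = (\<Sum>R\<in>supports n. u R * MR R \<rho> * Num \<rho>)"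
      unfolding Den_def by (simp add: sum_distrib_right)
    also have "\<dots> < (\<Sum>R\<in>supports n. u R * MR R \<rho> * (Bd R \<rho> * Den \<rho>))"
    proof (rule sum_strict_mono_ex1[OF finite_supports])
      show "\<forall>R\<in>supports n. u R * MR R \<rho> * Num \<rho> \<le> u R * MR R \<rho> * (Bd R \<rho> * Den \<rho>)"
      proof
        fix R assume R: "R \<in> supports n"
        show "u R * MR R \<rho> * Num \<rho> \<le> u R * MR R \<rho> * (Bd R \<rho> * Den \<rho>)"
        proof (cases "0 < u R * MR R \<rho>")
          case True
          then have "Num \<rho> < Bd R \<rho> * Den \<rho>" using H R by force
          then show ?thesis using True by (intro mult_left_mono) auto
        next
          case False
          then have z: "u R * MR R \<rho> = 0" using nn R by force
          show ?thesis unfolding z by simp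
        qed
      qed
      show "\<exists>R\<in>supports n. u R * MR R \<rho> * Num \<rho> < u R * MR R \<rho> * (Bd R \<rho> * Den \<rho>)"
      proof -
        obtain R where R: "R \<in> supports n" "0 < u R * MR R \<rho>" using ex by blast
        then have "Num \<rho> < Bd R \<rho> * Den \<rho>" using H by force
        then show ?thesis using R by (intro bexI[of _ R] mult_strict_left_mono) simp_all
      qed
    qed
    also have "\<dots> = Num \<rho> * Den \<rho>"
      unfolding Num_def sum_distrib_right by (rule sum.cong) (simp_all add: mult_ac)
    finally show False by (simp add: mult.commute)
  qed
  then obtain R where R: "R \<in> supports n" "0 < u R * MR R \<rho>" "Bd R \<rho> * Den \<rho> \<le> Num \<rho>" by blast
  have uR: "u R \<noteq> 0" using R(2) by auto
  have "MR R \<rho> \<noteq> 0" using R(2) by auto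
  then obtain x where x: "x \<in> cube n" "ind n \<rho> x * ind n R x * mp x \<noteq> 0"
    unfolding MR_def by (meson sum.neutral)
  have xin: "x \<in> subcube n \<rho>" "x \<in> subcube n R" using x(2) by (auto simp: ind_def split: if_splits)
  have Bd0: "0 \<le> Bd R \<rho>" by (rule Bd_nn)
  have h1: "Bd R \<rho> * Z0 \<rho> \<le> M \<rho> * (\<beta>1 * Z0 \<rho> + \<beta>0 * M \<rho>)"
  proof -
    have "Bd R \<rho> * Z0 \<rho> \<le> Bd R \<rho> * Den \<rho>" by (rule mult_left_mono[OF Z0_le_Den Bd0])
    also have "\<dots> \<le> Num \<rho>" by (rule R(3))
    also have "\<dots> \<le> M \<rho> * (\<Sum>x\<in>cube n. ind n \<rho> x * mp x * U x * W x)" by (rule Num_le)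
    also have "\<dots> \<le> M \<rho> * (\<beta>1 * Z0 \<rho> + \<beta>0 * M1 \<rho>)" by (rule mult_left_mono[OF UW_le M_nn])
    also have "\<dots> \<le> M \<rho> * (\<beta>1 * Z0 \<rho> + \<beta>0 * M \<rho>)"
      using M01[of \<rho>] M0_nn[of \<rho>] b0 Mpos by (intro mult_left_mono) (auto intro!: mult_left_mono)
    finally show ?thesis .
  qed
  have h2: "M \<rho> \<le> Z0 \<rho> / K" using Z0K Kpos by (simp add: pos_le_divide_eq mult.commute)
  have h3: "\<beta>0 * M \<rho> * M \<rho> \<le> \<beta>0 * M \<rho> * (Z0 \<rho> / K)"
    by (rule mult_left_mono[OF h2]) (use b0 Mpos in simp)
  have "Bd R \<rho> * Z0 \<rho> \<le> (c * M \<rho>) * Z0 \<rho>"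
  proof -
    have "c * M \<rho> * Z0 \<rho> = \<beta>1 * M \<rho> * Z0 \<rho> + \<beta>0 * M \<rho> * (Z0 \<rho> / K)"
      unfolding c_def K_def by (simp add: algebra_simps)
    moreover have "M \<rho> * (\<beta>1 * Z0 \<rho> + \<beta>0 * M \<rho>) = \<beta>1 * M \<rho> * Z0 \<rho> + \<beta>0 * M \<rho> * M \<rho>"
      by (simp add: algebra_simps)
    ultimately show ?thesis using h1 h3 by linarith
  qed
  then have "Bd R \<rho> \<le> c * M \<rho>" using Z0pos by (rule mult_right_le_imp_le)
  then show ?thesis using R(1) uR x(1) xin by blast
qed


lemma QR_le:
  assumes x0: "x0 \<in> cube n" "x0 \<in> subcube n \<rho>" "x0 \<in> subcube n R"
  shows "QR R k \<rho> \<le> Q (Suc k) \<rho> + Bd R \<rho>"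
proof -
  have pt: "qr R k \<rho> y \<le> qq (Suc k) \<rho> y + bd R y" if y: "y \<in> cube n" "y \<in> subcube n \<rho>" for y
  proof -
    have "qr R k \<rho> y \<le> (\<Sum>s\<in>supports n. ind n s y * (if free \<rho> s > Suc k then w s else 0)
         + ind n s y * (if cons R s then w s else 0))"
      unfolding qr_def
    proof (rule sum_mono)
      fix s assume s: "s \<in> supports n"
      have w0: "0 \<le> w s" using w_nn s by blast
      show "ind n s y * (if k + (if ee R \<rho> s then 1 else 0) < free \<rho> s then w s else 0)
          \<le> ind n s y * (if Suc k < free \<rho> s then w s else 0) + ind n s y * (if cons R s then w s else 0)"
      proof (cases "y \<in> subcube n s")
        case False then show ?thesis by (simp add: ind_def)
      next
        case ys: True
        show ?thesis
        proof (cases "cons R s")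
          case True then show ?thesis using w0 by (simp add: ind_def ys)
        next
          case False
          then obtain j where j: "j<n" "R!j \<noteq> None" "s!j \<noteq> None" "R!j \<noteq> s!j"
            unfolding cons_def by blast
          have "\<rho>!j = None"
          proof (rule ccontr)
            assume "\<rho>!j \<noteq> None"
            then have "\<rho>!j = Some (y!j)" "\<rho>!j = Some (x0!j)"
              using subcube_iff[OF y(1), of \<rho>] subcube_iff[OF x0(1), of \<rho>] y(2) x0(2) j(1) by auto
            moreover have "R!j = Some (x0!j)" using subcube_iff[OF x0(1), of R] x0(3) j(1,2) by auto
            moreover have "s!j = Some (y!j)" using subcube_iff[OF y(1), of s] ys j(1,3) by auto
            ultimately show False using j(4) by simp
          qed
          then have "ee R \<rho> s" unfolding ee_def using j by blast
          then show ?thesis using w0 by (simp add: ind_def ys)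
        qed
      qed
    qed
    also have "\<dots> = qq (Suc k) \<rho> y + bd R y" unfolding qq_def bd_def by (simp add: sum.distrib)
    finally show ?thesis .
  qed
  have "QR R k \<rho> \<le> (\<Sum>y\<in>cube n. ind n \<rho> y * (if f y then mp y * qq (Suc k) \<rho> y else 0)
      + ind n \<rho> y * (if f y then mp y * bd R y else 0))"
    unfolding QR_def
  proof (rule sum_mono)
    fix y assume y: "y \<in> cube n"
    show "ind n \<rho> y * (if f y then mp y * qr R k \<rho> y else 0) \<le>
      ind n \<rho> y * (if f y then mp y * qq (Suc k) \<rho> y else 0) + ind n \<rho> y * (if f y then mp y * bd R y else 0)"
    proof (cases "y \<in> subcube n \<rho> \<and> f y")
      case True
      have "mp y * qr R k \<rho> y \<le> mp y * (qq (Suc k) \<rho> y + bd R y)"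
        by (rule mult_left_mono[OF pt[OF y] mp_nn]) (use True in simp)
      then show ?thesis using True by (simp add: ind_def algebra_simps)
    next
      case False then show ?thesis by (auto simp: ind_def)
    qed
  qed
  also have "\<dots> = Q (Suc k) \<rho> + Bd R \<rho>" unfolding Q_def Bd_def by (simp add: sum.distrib)
  finally show ?thesis .
qed

lemma free0_sub:
  assumes "free \<rho> s = 0" "y \<in> cube n" "z \<in> cube n" "y \<in> subcube n \<rho>" "z \<in> subcube n \<rho>" "y \<in> subcube n s"
  shows "z \<in> subcube n s"
proof -
  have fin: "finite {i. i<n \<and> s!i \<noteq> None \<and> \<rho>!i = None}" by simp
  have e: "{i. i<n \<and> s!i \<noteq> None \<and> \<rho>!i = None} = {}"
    using assms(1) fin unfolding free_def by (simp only: card_0_eq)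
  have Y: "\<forall>j<n. \<rho>!j = None \<or> \<rho>!j = Some (y!j)" by (rule subcube_iff[OF assms(2), THEN iffD1, OF assms(4)])
  have Z: "\<forall>j<n. \<rho>!j = None \<or> \<rho>!j = Some (z!j)" by (rule subcube_iff[OF assms(3), THEN iffD1, OF assms(5)])
  have S: "\<forall>j<n. s!j = None \<or> s!j = Some (y!j)" by (rule subcube_iff[OF assms(2), THEN iffD1, OF assms(6)])
  have "\<forall>i<n. s!i = None \<or> s!i = Some (z!i)"
  proof (intro allI impI)
    fix i assume i: "i < n"
    show "s!i = None \<or> s!i = Some (z!i)"
    proof (cases "s!i = None")
      case False
      have "i \<notin> {i. i<n \<and> s!i \<noteq> None \<and> \<rho>!i = None}" using e by simp
      then have r0: "\<rho>!i \<noteq> None" using i False by simp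
      have r1: "\<rho>!i = Some (y!i)" using Y[rule_format, OF i] r0 by simp
      have r2: "\<rho>!i = Some (z!i)" using Z[rule_format, OF i] r0 by simp
      have "s!i = Some (y!i)" using S[rule_format, OF i] False by simp
      then show ?thesis using r1 r2 by simp
    qed simp
  qed
  then show ?thesis by (rule subcube_iff[OF assms(3), THEN iffD2])
qed

lemma err_true: "err (Leaf True) \<rho> = M0 \<rho>"
  unfolding err_def M0_def by (rule sum.cong) simp_all
lemma err_false: "err (Leaf False) \<rho> = M1 \<rho>"
  unfolding err_def M1_def by (rule sum.cong) simp_all

lemma base:
  assumes z: "z \<in> cube n" "z \<in> subcube n \<rho>" "\<not> f z"
  shows "M1 \<rho> \<le> D \<rho> + \<beta>1 * M1 \<rho> + Q 0 \<rho>"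
proof -
  have Wz: "W z \<le> \<beta>1" using zero_w z unfolding W_def by blast
  have pt: "W y \<le> \<beta>1 + qq 0 \<rho> y" if y: "y \<in> cube n" "y \<in> subcube n \<rho>" for y
  proof -
    have "W y \<le> (\<Sum>s\<in>supports n. ind n s z * w s + ind n s y * (if 0 < free \<rho> s then w s else 0))"
      unfolding W_def
    proof (rule sum_mono)
      fix s assume s: "s \<in> supports n"
      have w0: "0 \<le> w s" using w_nn s by blast
      show "ind n s y * w s \<le> ind n s z * w s + ind n s y * (if 0 < free \<rho> s then w s else 0)"
      proof (cases "0 < free \<rho> s")
        case True then show ?thesis using w0 by (simp add: ind_nn)
      next
        case False
        then have f0: "free \<rho> s = 0" by simp
        show ?thesis
        proof (cases "y \<in> subcube n s")
          case True
          then have "z \<in> subcube n s" using free0_sub[OF f0 y(1) z(1) y(2) z(2)] by blast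
          then show ?thesis using True w0 by (simp add: ind_def)
        qed (simp add: ind_def w0)
      qed
    qed
    also have "\<dots> = W z + qq 0 \<rho> y" unfolding W_def qq_def by (simp add: sum.distrib)
    finally show ?thesis using Wz by linarith
  qed
  have "M1 \<rho> \<le> (\<Sum>y\<in>cube n. ind n \<rho> y * (if f y then mp y * (1 - W y) + \<beta>1 * mp y + mp y * qq 0 \<rho> y else 0))"
    unfolding M1_def
  proof (rule sum_mono)
    fix y assume y: "y \<in> cube n"
    show "ind n \<rho> y * (if f y then mp y else 0) \<le> ind n \<rho> y * (if f y then mp y * (1 - W y) + \<beta>1 * mp y + mp y * qq 0 \<rho> y else 0)"
    proof (cases "y \<in> subcube n \<rho> \<and> f y")
      case True
      have "mp y * 1 \<le> mp y * ((1 - W y) + \<beta>1 + qq 0 \<rho> y)"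
        by (rule mult_left_mono[OF _ mp_nn]) (use pt[OF y] True in simp)
      then show ?thesis using True by (simp add: ind_def algebra_simps)
    next
      case False then show ?thesis by (auto simp: ind_def)
    qed
  qed
  also have "\<dots> = (\<Sum>y\<in>cube n. ind n \<rho> y * (if f y then mp y * (1 - W y) else 0) + \<beta>1 * (ind n \<rho> y * (if f y then mp y else 0))
      + ind n \<rho> y * (if f y then mp y * qq 0 \<rho> y else 0))"
    by (rule sum.cong) (auto simp: algebra_simps)
  also have "\<dots> = D \<rho> + \<beta>1 * M1 \<rho> + Q 0 \<rho>"
    unfolding D_def M1_def Q_def by (simp add: sum.distrib sum_distrib_left)
  finally show ?thesis .
qed

lemma fr_le:
  assumes "R \<in> supports n" "u R \<noteq> 0"
  shows "fr R \<rho> \<le> a"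
proof -
  have "fr R \<rho> \<le> supp_size n R" unfolding fr_def supp_size_def by (rule card_mono) auto
  moreover have "supp_size n R \<le> a" using u_supp assms by blast
  ultimately show ?thesis by linarith
qed

lemma main_lemma: "length \<rho> = n \<Longrightarrow> \<exists>T. dt_vars T \<subseteq> fv \<rho> \<and> dt_depth T \<le> a*k \<and> err T \<rho> \<le> Phi k \<rho>"
proof (induction k arbitrary: \<rho>)
  case 0
  show ?case
  proof (cases "\<exists>z\<in>cube n. z \<in> subcube n \<rho> \<and> \<not> f z")
    case True
    then obtain z where z: "z \<in> cube n" "z \<in> subcube n \<rho>" "\<not> f z" by blast
    have "err (Leaf False) \<rho> \<le> Phi 0 \<rho>"
      unfolding err_false Phi_def using base[OF z] mult_nonneg_nonneg[OF less_imp_le[OF dp] M_nn[of \<rho>]] by simp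
    then show ?thesis by (intro exI[of _ "Leaf False"]) simp
  next
    case False
    have "err (Leaf True) \<rho> = 0" unfolding err_def
      by (rule sum.neutral) (use False in \<open>auto simp: ind_def\<close>)
    moreover have "0 \<le> Phi 0 \<rho>" using Phi_nn[of \<rho> 0] dp M_nn[of \<rho>] by (smt (verit) mult_nonneg_nonneg)
    ultimately show ?thesis by (intro exI[of _ "Leaf True"]) simp
  qed
next
  case (Suc k)
  show ?case
  proof (cases "M0 \<rho> \<le> \<delta>' * M \<rho>")
    case True
    then have "err (Leaf True) \<rho> \<le> Phi (Suc k) \<rho>" unfolding err_true using Phi_nn[of \<rho> "Suc k"] by linarith
    then show ?thesis by (intro exI[of _ "Leaf True"]) simp
  next
    case False
    then obtain R x0 where R: "R \<in> supports n" "u R \<noteq> 0" "Bd R \<rho> \<le> c * M \<rho>"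
      and x0: "x0 \<in> cube n" "x0 \<in> subcube n \<rho>" "x0 \<in> subcube n R"
      using choose_R[of \<rho>] by (auto simp: not_le)
    obtain T where T: "dt_vars T \<subseteq> fv \<rho>" "dt_depth T \<le> fr R \<rho> + a*k" "err T \<rho> \<le> Psi R k \<rho>"
      using round[OF Suc.IH Suc.prems, where R=R] by blast
    have "dt_depth T \<le> a * Suc k" using T(2) fr_le[OF R(1,2), of \<rho>] by (simp only: mult_Suc_right)
    moreover have "err T \<rho> \<le> Phi (Suc k) \<rho>"
    proof -
      have "QR R k \<rho> \<le> Q (Suc k) \<rho> + c * M \<rho>" using QR_le[OF x0, of k] R(3) by linarith
      moreover have "real (Suc k) * c * M \<rho> = real k * c * M \<rho> + c * M \<rho>" by (simp add: distrib_right)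
      ultimately have "Psi R k \<rho> \<le> Phi (Suc k) \<rho>" unfolding Psi_def Phi_def by linarith
      then show ?thesis using T(3) by linarith
    qed
    ultimately show ?thesis using T(1) by (intro exI[of _ T] conjI)
  qed
qed


lemma ind_top: "x \<in> cube n \<Longrightarrow> ind n (replicate n (None::bool option)) x = 1"
  by (simp add: ind_def subcube_iff)

lemma M_top: "M (replicate n (None::bool option)) = 1"
proof -
  have "M (replicate n (None::bool option)) = (\<Sum>x\<in>cube n. \<Prod>i<n. pv p i (x!i))"
    unfolding M_def mp_def mu_pt_prod by (rule sum.cong) (simp_all add: ind_top)
  also have "\<dots> = 1" by (subst sum_cube_prod) (simp add: pv_def)
  finally show ?thesis .
qed

lemma Q_top: "Q b (replicate n (None::bool option)) = 0"
proof -
  have "qq b (replicate n (None::bool option)) y = 0" for y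
    unfolding qq_def
  proof (rule sum.neutral, intro ballI)
    fix s assume s: "s \<in> supports n"
    have "{i. i<n \<and> s!i \<noteq> None \<and> replicate n (None::bool option) ! i = None} = {i. i<n \<and> s!i \<noteq> None}" by auto
    then have "free (replicate n (None::bool option)) s = supp_size n s" unfolding free_def supp_size_def by (rule arg_cong)
    note fr = this
    show "ind n s y * (if b < free (replicate n (None::bool option)) s then w s else 0) = 0"
    proof (cases "w s = 0")
      case False
      then have "supp_size n s \<le> b" using w_supp s by blast
      then have "\<not> b < free (replicate n (None::bool option)) s" using fr by linarith
      then show ?thesis by simp
    qed simp
  qed
  note z = this
  show ?thesis unfolding Q_def
    by (rule sum.neutral, intro ballI) (simp only: z mult_zero_right mult_zero_left if_cancel)
qed

lemma fv_top: "fv (replicate n (None::bool option)) = {..<n}" unfolding fv_def by auto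

lemma mu_alt: "mu n p A = (\<Sum>x\<in>cube n. if x \<in> A then mu_pt n p x else 0)"
proof -
  have "A \<inter> cube n = {x\<in>cube n. x \<in> A}" by auto
  then show ?thesis unfolding mu_def by (simp add: sum.inter_filter[OF finite_cube])
qed

lemma err_top: "err T (replicate n (None::bool option)) = dt_error n p f T"
  unfolding err_def dt_error_def mu_alt mp_def by (rule sum.cong) (simp_all add: ind_top)

lemma D_top:
  assumes cov: "(\<Sum>s\<in>supports n. mu_z n p f True (subcube n s) * w s) \<ge> (1-\<alpha>1) * mu_z n p f True (cube n)"
    and al: "0 \<le> \<alpha>1"
  shows "D (replicate n (None::bool option)) \<le> \<alpha>1"
proof -
  let ?r = "replicate n (None::bool option)"
  have m1: "mu_z n p f True (cube n) = M1 ?r"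
    unfolding mu_z_def mu_alt M1_def mp_def by (rule sum.cong) (simp_all add: ind_top)
  have "(\<Sum>s\<in>supports n. mu_z n p f True (subcube n s) * w s)
      = (\<Sum>s\<in>supports n. \<Sum>x\<in>cube n. (if f x then mp x else 0) * (ind n s x * w s))"
    unfolding mu_z_def mu_alt mp_def sum_distrib_right
    by (intro sum.cong refl) (simp add: ind_def)
  also have "\<dots> = (\<Sum>x\<in>cube n. \<Sum>s\<in>supports n. (if f x then mp x else 0) * (ind n s x * w s))"
    by (rule sum.swap)
  also have "\<dots> = (\<Sum>x\<in>cube n. (if f x then mp x else 0) * W x)"
    unfolding W_def by (simp add: sum_distrib_left)
  finally have e: "(\<Sum>s\<in>supports n. mu_z n p f True (subcube n s) * w s) = (\<Sum>x\<in>cube n. (if f x then mp x else 0) * W x)" .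
  have "D ?r = (\<Sum>x\<in>cube n. (if f x then mp x else 0) - (if f x then mp x else 0) * W x)"
    unfolding D_def by (rule sum.cong) (simp_all add: ind_top algebra_simps)
  also have "\<dots> = M1 ?r - (\<Sum>x\<in>cube n. (if f x then mp x else 0) * W x)"
    unfolding M1_def by (simp add: sum_subtractf ind_top)
  moreover have "(1 - \<alpha>1) * M1 ?r \<le> (\<Sum>x\<in>cube n. (if f x then mp x else 0) * W x)"
    using cov unfolding e m1 .
  ultimately have "D ?r \<le> M1 ?r - (1 - \<alpha>1) * M1 ?r" by linarith
  also have "\<dots> = \<alpha>1 * M1 ?r" by (simp add: algebra_simps)
  also have "\<dots> \<le> \<alpha>1 * 1"
    using M01[of ?r] M0_nn[of ?r] M_top by (intro mult_left_mono al) linarith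
  finally show ?thesis by simp
qed

lemma final:
  assumes cov: "(\<Sum>s\<in>supports n. mu_z n p f True (subcube n s) * w s) \<ge> (1-\<alpha>1) * mu_z n p f True (cube n)"
    and al: "0 \<le> \<alpha>1"
  shows "\<exists>T. dt_vars T \<subseteq> {..<n} \<and> dt_depth T \<le> a*b \<and> dt_error n p f T \<le> \<delta>' + \<alpha>1 + \<beta>1 + real b * c"
proof -
  let ?r = "replicate n (None::bool option)"
  have "\<exists>T. dt_vars T \<subseteq> fv ?r \<and> dt_depth T \<le> a*b \<and> err T ?r \<le> Phi b ?r"
    by (rule main_lemma) simp
  then obtain T where T: "dt_vars T \<subseteq> fv ?r" "dt_depth T \<le> a*b" "err T ?r \<le> Phi b ?r"
    by blast
  have m1: "M1 ?r \<le> 1" using M01[of ?r] M0_nn[of ?r] M_top by linarith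
  have "Phi b ?r \<le> \<delta>' + \<alpha>1 + \<beta>1 + real b * c"
    unfolding Phi_def M_top Q_top using D_top[OF cov al] m1 b1 mult_left_mono[OF m1 b1] by simp
  then show ?thesis using T err_top fv_top by (intro exI[of _ T]) auto
qed

end

lemma conv_filter: "(\<Sum>s\<in>{s\<in>supports n. x \<in> subcube n s}. g s) = (\<Sum>s\<in>supports n. ind n s x * g s)"
  unfolding sum.inter_filter[OF finite_supports] ind_def by (rule sum.cong) simp_all

theorem mainTheorem11:
  fixes n :: nat and f :: "bool list \<Rightarrow> bool" and p :: "nat \<Rightarrow> real"
    and \<delta> \<alpha>0 \<beta>0 \<alpha>1 \<beta>1 :: real and a b :: nat
  assumes "\<delta> > 0"
    and "0 \<le> \<alpha>0" and "\<alpha>0 < 1"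
    and "0 \<le> \<beta>0" and "0 \<le> \<alpha>1" and "0 \<le> \<beta>1"
    and "prod_dist n p"
    and "feasible n p f \<alpha>0 \<beta>0 \<alpha>1 \<beta>1 a b"
  shows "\<exists>T. dt_vars T \<subseteq> {..<n} \<and> dt_depth T \<le> a * b \<and>
    dt_error n p f T \<le> 1/4 + \<alpha>1 + \<beta>1 + 4 * real b * (\<beta>1 + \<delta>) + \<beta>0 / ((1 - \<alpha>0) * \<delta>)"
proof -
  from assms(8) obtain u w where
    nn: "\<forall>s\<in>supports n. 0 \<le> u s \<and> 0 \<le> w s"
    and us: "\<forall>s\<in>supports n. u s \<noteq> 0 \<longrightarrow> supp_size n s \<le> a"
    and ws: "\<forall>s\<in>supports n. w s \<noteq> 0 \<longrightarrow> supp_size n s \<le> b"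
    and zc: "\<forall>x\<in>cube n. \<not> f x \<longrightarrow> (\<Sum>s\<in>{s\<in>supports n. x \<in> subcube n s}. u s) \<ge> 1 - \<alpha>0"
    and ou: "\<forall>x\<in>cube n. f x \<longrightarrow> (\<Sum>s\<in>{s\<in>supports n. x \<in> subcube n s}. u s) \<le> \<beta>0"
    and cov: "(\<Sum>s\<in>supports n. mu_z n p f True (subcube n s) * w s) \<ge> (1 - \<alpha>1) * mu_z n p f True (cube n)"
    and wl: "\<forall>x\<in>cube n. (\<Sum>s\<in>{s\<in>supports n. x \<in> subcube n s}. w s) \<le> 1"
    and zw: "\<forall>x\<in>cube n. \<not> f x \<longrightarrow> (\<Sum>s\<in>{s\<in>supports n. x \<in> subcube n s}. w s) \<le> \<beta>1"
    unfolding feasible_def by blast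
  define \<delta>' where "\<delta>' = 1/4 + real b * \<delta>"
  have dp: "0 < \<delta>'" unfolding \<delta>'_def using assms(1) by (simp add: add_pos_nonneg)
  interpret L n p f u w \<alpha>0 \<beta>0 \<beta>1 \<delta>' a b
  proof (unfold_locales)
    show "prod_dist n p" by (rule assms(7))
    show "\<forall>s\<in>supports n. 0 \<le> u s" using nn by blast
    show "\<forall>s\<in>supports n. 0 \<le> w s" using nn by blast
    show "\<forall>s\<in>supports n. u s \<noteq> 0 \<longrightarrow> supp_size n s \<le> a" by (rule us)
    show "\<forall>s\<in>supports n. w s \<noteq> 0 \<longrightarrow> supp_size n s \<le> b" by (rule ws)
    show "\<forall>x\<in>cube n. \<not> f x \<longrightarrow> (\<Sum>s\<in>supports n. ind n s x * u s) \<ge> 1 - \<alpha>0"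
      using zc unfolding conv_filter .
    show "\<forall>x\<in>cube n. f x \<longrightarrow> (\<Sum>s\<in>supports n. ind n s x * u s) \<le> \<beta>0"
      using ou unfolding conv_filter .
    show "\<forall>x\<in>cube n. (\<Sum>s\<in>supports n. ind n s x * w s) \<le> 1"
      using wl unfolding conv_filter .
    show "\<forall>x\<in>cube n. \<not> f x \<longrightarrow> (\<Sum>s\<in>supports n. ind n s x * w s) \<le> \<beta>1"
      using zw unfolding conv_filter .
  qed (use assms(3,4,6) dp in auto)
  obtain T where T: "dt_vars T \<subseteq> {..<n}" "dt_depth T \<le> a*b" "dt_error n p f T \<le> \<delta>' + \<alpha>1 + \<beta>1 + real b * c"
    using final[OF cov assms(5)] by blast
  have K: "0 < 1 - \<alpha>0" using assms(3) by simp
  have bd: "real b * \<delta> \<le> \<delta>'" unfolding \<delta>'_def by simp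
  have q: "real b / \<delta>' \<le> 1 / \<delta>"
    using bd dp assms(1) by (simp add: divide_simps mult.commute)
  have "real b * (\<beta>0 / ((1 - \<alpha>0) * \<delta>')) = (\<beta>0 / (1 - \<alpha>0)) * (real b / \<delta>')" by simp
  also have "\<dots> \<le> (\<beta>0 / (1 - \<alpha>0)) * (1 / \<delta>)"
    by (rule mult_left_mono[OF q]) (use assms(4) K in simp)
  also have "\<dots> = \<beta>0 / ((1 - \<alpha>0) * \<delta>)" by simp
  finally have t1: "real b * (\<beta>0 / ((1 - \<alpha>0) * \<delta>')) \<le> \<beta>0 / ((1 - \<alpha>0) * \<delta>)" .
  have t2: "real b * \<beta>1 \<le> 4 * real b * \<beta>1" using assms(6) by simp
  have t3: "\<delta>' \<le> 1/4 + 4 * real b * \<delta>" unfolding \<delta>'_def using assms(1) by simp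
  have "\<delta>' + \<alpha>1 + \<beta>1 + real b * c \<le> 1/4 + \<alpha>1 + \<beta>1 + 4 * real b * (\<beta>1 + \<delta>) + \<beta>0 / ((1 - \<alpha>0) * \<delta>)"
    unfolding c_def using t1 t2 t3 by (simp add: distrib_left)
  then show ?thesis using T by (intro exI[of _ T]) simp
qed

end
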